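(* For $(n,m) \in \mathbb{Z}^2$ let $q_{(n,m)}(x) = x^4 + n x^3 + m x^2 + n x + 1$, and let $Q = \{(n,m) \in \mathbb{Z}^2 : q_{(n,m)} \text{ has no real root}\}$. Then $\rho(Q) = 0$, where for $L \subseteq \mathbb{Z}^2$ $$\rho(L) = \limsup_{K \to \infty} \frac{|\{(n,m) \in L : \|(n,m)\| \le K\}|}{|\{(n,m) \in \mathbb{Z}^2 : \|(n,m)\| \le K\}|}, \qquad \|(n,m)\| = \max\{|n|,|m|\}.$$ *)

theory Defs
  imports "HOL-Analysis.Analysis"
begin

definition q :: "int \<times> int \<Rightarrow> real \<Rightarrow> real" where
  "q nm x = x^4 + of_int (fst nm) * x^3 + of_int (snd nm) * x^2 + of_int (fst nm) * x + 1"

definition Q :: "(int \<times> int) set" where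
  "Q = {nm. \<not> (\<exists>x::real. q nm x = 0)}"

definition maxnorm :: "int \<times> int \<Rightarrow> int" where
  "maxnorm nm = max \<bar>fst nm\<bar> \<bar>snd nm\<bar>"

definition box :: "real \<Rightarrow> (int \<times> int) set" where
  "box K = {nm. real_of_int (maxnorm nm) \<le> K}"

definition rho :: "(int \<times> int) set \<Rightarrow> ereal" where
  "rho L = Limsup at_top (\<lambda>K::real. ereal (real (card (L \<inter> box K)) / real (card (box K))))"
end

theory Submission
  imports Defs "HOL-Real_Asymp.Real_Asymp"
begin

lemma q_cont: "isCont (q nm) x"
  unfolding q_def by (intro continuous_intros)

lemma q_pos:
  assumes "nm \<in> Q" shows "q nm x > 0"
proof (rule ccontr)
  assume "\<not> q nm x > 0"
  hence h: "q nm x \<le> 0" by simp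
  have q0: "q nm 0 = 1" by (simp add: q_def)
  have "\<exists>y. q nm y = 0"
  proof (cases "x \<ge> 0")
    case True
    from IVT2[where f="q nm" and a=0 and b=x and y=0, OF h _ True] q0 q_cont show ?thesis by auto
  next
    case False
    from IVT[where f="q nm" and a=x and b=0 and y=0, OF h] False q0 q_cont show ?thesis by auto
  qed
  thus False using assms by (simp add: Q_def)
qed

lemma Q_bound:
  assumes "(n, m) \<in> Q" shows "n^2 \<le> 4*m + 8"
proof (cases "n = 0")
  case True
  have "q (n,m) 1 > 0" using q_pos[OF assms] .
  hence "real_of_int (2 + 2*n + m) > 0" by (simp add: q_def)
  hence "m > -2" using True by simp
  thus ?thesis using True by simp
next
  case False
  have "q (n,m) (- real_of_int n / 2) > 0" using q_pos[OF assms] .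
  hence "real_of_int (- (n^4) + 4*m*n^2 - 8*n^2 + 16) > 0"
    by (simp add: q_def field_simps power_def)
  hence A: "- (n^4) + 4*m*n^2 - 8*n^2 + 16 > 0" by linarith
  show ?thesis
  proof (rule ccontr)
    assume "\<not> ?thesis"
    hence B: "4*m - 8 - n^2 \<le> -17" by simp
    have C: "n^2 \<ge> 1" using False by (simp add: int_one_le_iff_zero_less)
    have "n^2 * (4*m - 8 - n^2) \<le> n^2 * (-17)"
      using B C by (intro mult_left_mono) auto
    also have "\<dots> \<le> -17" using C by simp
    finally show False using A by (simp add: algebra_simps power_def)
  qed
qed

definition I :: "real \<Rightarrow> int set" where "I r = {n. real_of_int \<bar>n\<bar> \<le> r}"

lemma I_eq: "r \<ge> 0 \<Longrightarrow> I r = {-\<lfloor>r\<rfloor>..\<lfloor>r\<rfloor>}"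
proof (rule set_eqI)
  fix x :: int
  have a: "(-x \<le> \<lfloor>r\<rfloor>) = (real_of_int (-x) \<le> r)" by (rule le_floor_iff)
  have b: "(x \<le> \<lfloor>r\<rfloor>) = (real_of_int x \<le> r)" by (rule le_floor_iff)
  show "x \<in> I r \<longleftrightarrow> x \<in> {-\<lfloor>r\<rfloor>..\<lfloor>r\<rfloor>}"
    unfolding I_def using a b by (auto simp: abs_le_iff)
qed

lemma card_I: "r \<ge> 0 \<Longrightarrow> real (card (I r)) = 2 * of_int \<lfloor>r\<rfloor> + 1"
  by (simp add: I_eq)

lemma box_eq: "box K = I K \<times> I K"
  unfolding box_def I_def maxnorm_def by auto

lemma QB_sub: "K \<ge> 0 \<Longrightarrow> Q \<inter> box K \<subseteq> I (sqrt (4*K+8)) \<times> I K"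
proof
  fix p assume K: "K \<ge> 0" and p: "p \<in> Q \<inter> box K"
  obtain n m where pe: "p = (n,m)" by force
  have b: "p \<in> I K \<times> I K" using p box_eq by auto
  have "n^2 \<le> 4*m+8" using Q_bound p pe by auto
  hence "real_of_int (n^2) \<le> 4 * real_of_int m + 8" by linarith
  moreover have "real_of_int m \<le> K" using b pe by (auto simp: I_def)
  ultimately have "(real_of_int \<bar>n\<bar>)^2 \<le> 4*K+8" by simp
  hence "real_of_int \<bar>n\<bar> \<le> sqrt (4*K+8)" by (simp add: real_le_rsqrt)
  thus "p \<in> I (sqrt (4*K+8)) \<times> I K" using b pe by (auto simp: I_def)
qed

lemma ratio_bound:
  assumes K: "K \<ge> 1"
  shows "real (card (Q \<inter> box K)) / real (card (box K)) \<le> (2 * sqrt (4*K+8) + 1) / (2*K - 1)"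
proof -
  let ?s = "sqrt (4*K+8)"
  have fin: "finite (I ?s \<times> I K)" using K by (simp add: I_eq)
  have "card (Q \<inter> box K) \<le> card (I ?s \<times> I K)"
    by (rule card_mono[OF fin QB_sub]) (use K in auto)
  hence c1: "real (card (Q \<inter> box K)) \<le> (2 * of_int \<lfloor>?s\<rfloor> + 1) * (2 * of_int \<lfloor>K\<rfloor> + 1)"
    using card_I[of ?s] card_I[of K] K by (simp add: card_cartesian_product) (metis of_nat_le_iff of_nat_mult)
  have c2: "real (card (box K)) = (2 * of_int \<lfloor>K\<rfloor> + 1) * (2 * of_int \<lfloor>K\<rfloor> + 1)"
    using card_I[of K] K by (simp add: box_eq card_cartesian_product)
  have fK: "of_int \<lfloor>K\<rfloor> \<ge> K - 1" by linarith
  have fK1: "of_int \<lfloor>K\<rfloor> \<ge> (1::real)" by (metis K floor_mono floor_one of_int_1 of_int_le_iff)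
  have fs: "of_int \<lfloor>?s\<rfloor> \<le> ?s" by simp
  have "real (card (Q \<inter> box K)) / real (card (box K)) \<le> (2 * of_int \<lfloor>?s\<rfloor> + 1) / (2 * of_int \<lfloor>K\<rfloor> + 1)"
    using c1 c2 fK1 by (simp add: divide_simps)
  also have "\<dots> \<le> (2 * ?s + 1) / (2*K - 1)"
  proof (rule frac_le)
    have "?s \<ge> 0" using K by simp
    thus "0 \<le> 2 * ?s + 1" by linarith
  qed (use fK fK1 fs K in linarith)+
  finally show ?thesis .
qed

theorem mainTheorem5:
  shows "rho Q = 0"
proof -
  let ?g = "\<lambda>K::real. real (card (Q \<inter> box K)) / real (card (box K))"
  have h: "((\<lambda>K::real. (2 * sqrt (4*K+8) + 1) / (2*K - 1)) \<longlongrightarrow> 0) at_top"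
    by real_asymp
  have "(?g \<longlongrightarrow> 0) at_top"
  proof (rule tendsto_sandwich[OF _ _ tendsto_const h])
    show "\<forall>\<^sub>F K in at_top. 0 \<le> ?g K" by simp
    show "\<forall>\<^sub>F K in at_top. ?g K \<le> (2 * sqrt (4*K+8) + 1) / (2*K - 1)"
      using eventually_ge_at_top[of "1::real"] by eventually_elim (rule ratio_bound)
  qed
  hence "((\<lambda>K. ereal (?g K)) \<longlongrightarrow> ereal 0) at_top" by (rule tendsto_ereal)
  hence "Limsup at_top (\<lambda>K. ereal (?g K)) = ereal 0"
    by (intro lim_imp_Limsup) auto
  thus ?thesis by (simp add: rho_def zero_ereal_def)
qed

end
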